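(* Let $R>0$ and let $A\subset\mathbb{R}^d$ be such that $A$ and $\overline{A^c}$ are $R$-supported bodies and $\partial A=\partial\overline{A^c}$. Then $\mathrm{reach}(A)\ge R$.
   Context: A body is a nonempty closed subset of $\mathbb{R}^d$; $A^c=\mathbb{R}^d\setminus A$; $\overline{X}$ is the closure. $B(x)=\{y:|y-x|<R\}$; $S^{d-1}$ the unit sphere. For a body $A$ and $a\in\partial A$, $\mathcal{N}_R(A,a)=\{v\in S^{d-1}: A\cap B(a+Rv)=\emptyset\}$; $A$ is $R$-supported if $\mathcal{N}_R(A,a)\ne\emptyset$ for all $a\in\partial A$. $\mathrm{Unp}(A)$ is the set of points with a unique nearest point in $A$; $\mathrm{reach}(A,a)=\sup\{\rho>0: \{x:|x-a|<\rho\}\subset\mathrm{Unp}(A)\}$, $\mathrm{reach}(A)=\inf_{a\in A}\mathrm{reach}(A,a)$. *)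

theory Defs
  imports "HOL-Analysis.Analysis" "HOL-Library.Extended_Real"
begin

definition is_body :: "'a::euclidean_space set \<Rightarrow> bool" where
  "is_body A \<longleftrightarrow> A \<noteq> {} \<and> closed A"

definition normals_R :: "real \<Rightarrow> 'a::euclidean_space set \<Rightarrow> 'a \<Rightarrow> 'a set" where
  "normals_R R A a = {v. norm v = 1 \<and> A \<inter> ball (a + R *\<^sub>R v) R = {}}"

definition R_supported :: "real \<Rightarrow> 'a::euclidean_space set \<Rightarrow> bool" where
  "R_supported R A \<longleftrightarrow> is_body A \<and> (\<forall>a \<in> frontier A. normals_R R A a \<noteq> {})"

definition Unp :: "'a::euclidean_space set \<Rightarrow> 'a set" where
  "Unp A = {x. \<exists>!y. y \<in> A \<and> (\<forall>z \<in> A. dist x y \<le> dist x z)}"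

definition reach_at :: "'a::euclidean_space set \<Rightarrow> 'a \<Rightarrow> ereal" where
  "reach_at A a = Sup {ereal \<rho> | \<rho>. \<rho> > 0 \<and> ball a \<rho> \<subseteq> Unp A}"

definition reach :: "'a::euclidean_space set \<Rightarrow> ereal" where
  "reach A = (INF a \<in> A. reach_at A a)"

end

theory Submission
  imports Defs
begin

lemma balls_disj_dist:
  fixes c1 c2 :: "'a::euclidean_space"
  assumes "ball c1 r1 \<inter> ball c2 r2 = {}" "r1 > 0" "r2 > 0"
  shows "dist c1 c2 \<ge> r1 + r2"
proof (rule ccontr)
  assume h: "\<not> dist c1 c2 \<ge> r1 + r2"
  define t where "t = r1 / (r1 + r2)"
  define z where "z = c1 + t *\<^sub>R (c2 - c1)"
  have t0: "0 < t" "t < 1" using assms by (auto simp: t_def field_simps)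
  have "dist c1 z = t * dist c1 c2" using t0
    by (simp add: z_def dist_norm norm_minus_commute)
  also have "\<dots> < t * (r1 + r2)" using h t0 by simp
  also have "\<dots> = r1" using assms by (simp add: t_def)
  finally have z1: "z \<in> ball c1 r1" by simp
  have "c2 - z = (1 - t) *\<^sub>R (c2 - c1)" by (simp add: z_def algebra_simps)
  hence "dist c2 z = (1 - t) * dist c1 c2" using t0
    by (simp add: dist_norm norm_minus_commute)
  also have "\<dots> < (1 - t) * (r1 + r2)" using h t0 by simp
  also have "\<dots> = r2" using assms by (simp add: t_def field_simps)
  finally have z2: "z \<in> ball c2 r2" by simp
  show False using z1 z2 assms(1) by blast
qed

lemma key:
  fixes A :: "'a::euclidean_space set"
  assumes R: "R > 0"
    and sA: "R_supported R A"
    and sC: "R_supported R (closure (- A))"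
    and fr: "frontier A = frontier (closure (- A))"
    and pA: "p \<in> A" and pmin: "\<forall>z\<in>A. dist x p \<le> dist x z"
    and xA: "x \<notin> A"
  shows "\<exists>v. norm v = 1 \<and> x = p - dist x p *\<^sub>R v \<and> A \<inter> ball (p - R *\<^sub>R v) R = {}"
proof -
  define d where "d = dist x p"
  have d0: "d > 0" using pA xA by (auto simp: d_def)
  have clA: "closed A" using sA by (simp add: R_supported_def is_body_def)
  have "p \<notin> interior A"
  proof
    assume "p \<in> interior A"
    then obtain e where e: "e > 0" "ball p e \<subseteq> A" by (auto simp: mem_interior)
    define s where "s = min (e/2) (d/2) / d"
    have s0: "0 < s" "s < 1" using e d0 by (auto simp: s_def field_simps min_def)
    define y where "y = p + s *\<^sub>R (x - p)"
    have "dist p y = s * d" using s0 by (simp add: y_def d_def dist_norm norm_minus_commute)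
    also have "\<dots> \<le> e/2" using d0 by (simp add: s_def)
    finally have "y \<in> A" using e by auto
    have "x - y = (1 - s) *\<^sub>R (x - p)" by (simp add: y_def algebra_simps)
    hence "dist x y = (1 - s) * d" using s0 by (simp add: dist_norm d_def)
    also have "\<dots> < d" using s0 d0 by simp
    finally show False using pmin \<open>y \<in> A\<close> by (auto simp: d_def)
  qed
  hence pf: "p \<in> frontier A" using pA clA by (simp add: frontier_def)
  obtain v where v: "norm v = 1" "closure (- A) \<inter> ball (p + R *\<^sub>R v) R = {}"
    using sC pf fr by (auto simp: R_supported_def normals_R_def)
  obtain u where u: "norm u = 1" "A \<inter> ball (p + R *\<^sub>R u) R = {}"
    using sA pf by (auto simp: R_supported_def normals_R_def)
  have bvA: "ball (p + R *\<^sub>R v) R \<subseteq> A" using v(2) closure_subset by blast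
  have bx: "ball x d \<inter> A = {}" using pmin by (auto simp: d_def)
  have "ball x d \<inter> ball (p + R *\<^sub>R v) R = {}" using bx bvA by blast
  hence "dist x (p + R *\<^sub>R v) \<ge> d + R" using balls_disj_dist d0 R by blast
  moreover have "dist x (p + R *\<^sub>R v) = norm ((x - p) + (- (R *\<^sub>R v)))"
    by (simp add: dist_norm algebra_simps)
  moreover have "norm ((x - p) + (- (R *\<^sub>R v))) \<le> norm (x - p) + norm (- (R *\<^sub>R v))"
    by (rule norm_triangle_ineq)
  moreover have "norm (x - p) = d" by (simp add: d_def dist_norm)
  moreover have "norm (- (R *\<^sub>R v)) = R" using v(1) R by simp
  ultimately have "norm ((x - p) + (- (R *\<^sub>R v))) = norm (x - p) + norm (- (R *\<^sub>R v))"
    by linarith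
  hence "norm (x - p) *\<^sub>R (- (R *\<^sub>R v)) = norm (- (R *\<^sub>R v)) *\<^sub>R (x - p)"
    by (simp only: norm_triangle_eq)
  hence "d *\<^sub>R (- (R *\<^sub>R v)) = R *\<^sub>R (x - p)"
    using v(1) R by (simp add: d_def dist_norm)
  hence "R *\<^sub>R (x - p) = R *\<^sub>R (- (d *\<^sub>R v))" by (simp add: algebra_simps)
  hence "x - p = - (d *\<^sub>R v)" using R by (metis scaleR_left_imp_eq less_irrefl)
  hence xp: "x = p - d *\<^sub>R v" by (simp add: algebra_simps)
  have "ball (p + R *\<^sub>R u) R \<inter> ball (p + R *\<^sub>R v) R = {}" using u(2) bvA by blast
  hence "dist (p + R *\<^sub>R u) (p + R *\<^sub>R v) \<ge> R + R" using balls_disj_dist R by blast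
  moreover have "dist (p + R *\<^sub>R u) (p + R *\<^sub>R v) = R * norm (u + (- v))"
    using R by (simp add: dist_norm scaleR_diff_right[symmetric])
  ultimately have "norm (u + (- v)) \<ge> 2" using R by (simp add: field_simps)
  moreover have "norm (u + (- v)) \<le> norm u + norm (-v)" by (rule norm_triangle_ineq)
  ultimately have "norm (u + (- v)) = norm u + norm (-v)" using u(1) v(1) by simp
  hence "norm u *\<^sub>R (- v) = norm (- v) *\<^sub>R u" by (simp only: norm_triangle_eq)
  hence uv: "u = - v" using u(1) v(1) by simp
  show ?thesis using v(1) xp u(2) uv by (intro exI[of _ v]) (simp add: d_def)
qed


lemma uniq_aux:
  fixes x p q v :: "'a::euclidean_space"
  assumes "d < R" "norm v = 1" "x = p - d *\<^sub>R v" "q \<notin> ball (p - R *\<^sub>R v) R"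
    "dist x q = d"
  shows "q = p"
proof -
  have "dist q (p - R *\<^sub>R v) \<ge> R" using assms(4) by (simp add: dist_commute)
  hence n1: "norm (q - (p - R *\<^sub>R v)) \<ge> R" by (simp only: dist_norm)
  have eq: "q - (p - R *\<^sub>R v) = (q - x) + (R - d) *\<^sub>R v"
    using assms(3) by (simp add: algebra_simps)
  have "norm ((q - x) + (R - d) *\<^sub>R v) \<ge> R" using n1 unfolding eq .
  moreover have "norm ((q - x) + (R - d) *\<^sub>R v) \<le> norm (q - x) + norm ((R - d) *\<^sub>R v)"
    by (rule norm_triangle_ineq)
  moreover have "norm (q - x) = d" using assms(5) by (simp add: dist_norm norm_minus_commute)
  moreover have "norm ((R - d) *\<^sub>R v) = R - d" using assms(1,2) by simp
  ultimately have "norm ((q - x) + (R - d) *\<^sub>R v) = norm (q - x) + norm ((R - d) *\<^sub>R v)"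
    by linarith
  hence "norm (q - x) *\<^sub>R ((R - d) *\<^sub>R v) = norm ((R - d) *\<^sub>R v) *\<^sub>R (q - x)"
    by (simp only: norm_triangle_eq)
  hence h: "(R - d) *\<^sub>R (d *\<^sub>R v) = (R - d) *\<^sub>R (q - x)"
    using assms(1,2,5) by (simp add: dist_norm norm_minus_commute mult.commute)
  have "R - d \<noteq> 0" using assms(1) by simp
  hence "d *\<^sub>R v = q - x" using scaleR_left_imp_eq h by blast
  thus "q = p" using assms(3) by (simp add: algebra_simps)
qed

theorem mainTheorem9:
  fixes A :: "'a::euclidean_space set" and R :: real
  assumes "R > 0"
    and "R_supported R A"
    and "R_supported R (closure (- A))"
    and "frontier A = frontier (closure (- A))"
  shows "reach A \<ge> ereal R"
proof -
  have clA: "closed A" and neA: "A \<noteq> {}" using assms(2) unfolding R_supported_def is_body_def by blast+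
  have ba: "ball a R \<subseteq> Unp A" if aA: "a \<in> A" for a
  proof
    fix x assume xb: "x \<in> ball a R"
    obtain p where p0: "p \<in> A" "\<And>z. z \<in> A \<Longrightarrow> dist x p \<le> dist x z"
      using distance_attains_inf[OF clA neA, of x] by blast
    have p: "p \<in> A" "\<forall>z\<in>A. dist x p \<le> dist x z" using p0 by auto
    have "dist x p \<le> dist x a" using p(2) aA by blast
    hence dR: "dist x p < R" using xb by (simp add: dist_commute)
    have uq: "q = p" if q: "q \<in> A" "\<forall>z\<in>A. dist x q \<le> dist x z" for q
    proof (cases "x \<in> A")
      case True
      have "dist x p \<le> dist x x" using p(2) True by blast
      moreover have "dist x q \<le> dist x x" using q(2) True by blast
      ultimately show ?thesis by simp
    next
      case False
      obtain v where v: "norm v = 1" "x = p - dist x p *\<^sub>R v" "A \<inter> ball (p - R *\<^sub>R v) R = {}"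
        using key[OF assms p False] by blast
      have "dist x q \<le> dist x p" "dist x p \<le> dist x q" using p q by blast+
      hence "dist x q = dist x p" by linarith
      moreover have "q \<notin> ball (p - R *\<^sub>R v) R" using v(3) q(1) by blast
      ultimately show ?thesis using uniq_aux[OF dR v(1) v(2), of q] by simp
    qed
    have "\<exists>!y. y \<in> A \<and> (\<forall>z \<in> A. dist x y \<le> dist x z)"
    proof (rule ex1I[of _ p])
      show "p \<in> A \<and> (\<forall>z \<in> A. dist x p \<le> dist x z)" using p by blast
    next
      fix y assume "y \<in> A \<and> (\<forall>z \<in> A. dist x y \<le> dist x z)"
      thus "y = p" using uq by blast
    qed
    thus "x \<in> Unp A" unfolding Unp_def mem_Collect_eq .
  qed
  have "reach_at A a \<ge> ereal R" if "a \<in> A" for a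
  proof -
    have "ereal R \<in> {ereal \<rho> | \<rho>. \<rho> > 0 \<and> ball a \<rho> \<subseteq> Unp A}"
      using ba[OF that] assms(1) by blast
    thus ?thesis unfolding reach_at_def by (rule Sup_upper)
  qed
  thus ?thesis unfolding reach_def by (rule INF_greatest)
qed

end
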